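(* Let $R=\bigoplus_{n\ge0}R_n=R_0[R_1]$ be a standard graded Noetherian ring such that $R_0$ is an Artinian local ring with maximal ideal $\mathfrak{m}$ and $\mathfrak{p}:=\mathfrak{m}R$ is a prime ideal. Let $M$ be a finitely generated graded $R$-module with $\operatorname{Ass}_R M=\{\mathfrak{p}\}$. If $M_t\neq 0$ for some $t\in\mathbb{Z}$, then there exists a graded (degree-preserving) injective homomorphism $(R/\mathfrak{p})(-t)\to M$; more precisely, there is a homogeneous $x\in M_t$ with $(0):_R x=\mathfrak{p}$.
   Context: $(R/\mathfrak{p})(-t)$ denotes the shifted graded module with $((R/\mathfrak{p})(-t))_n=(R/\mathfrak{p})_{n-t}$. *)

theory Defs
  imports Complex_Main
begin

text \<open>Commutative rings are types of class comm_ring_1 (the whole type is the ring R);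
modules are types of class ab_group_add with a scalar action s satisfying module s.\<close>

definition add_subgroup :: "'b::ab_group_add set \<Rightarrow> bool" where
  "add_subgroup A \<longleftrightarrow> 0 \<in> A \<and> (\<forall>x\<in>A. \<forall>y\<in>A. x + y \<in> A) \<and> (\<forall>x\<in>A. - x \<in> A)"

definition ring_ideal :: "'a::comm_ring_1 set \<Rightarrow> bool" where
  "ring_ideal I \<longleftrightarrow> add_subgroup I \<and> (\<forall>r x. x \<in> I \<longrightarrow> r * x \<in> I)"

definition mspan :: "('a::comm_ring_1 \<Rightarrow> 'b::ab_group_add \<Rightarrow> 'b) \<Rightarrow> 'b set \<Rightarrow> 'b set" where
  "mspan s B = {(\<Sum>a\<in>T. s (r a) a) | T r. finite T \<and> T \<subseteq> B}"

definition gen_ideal :: "'a::comm_ring_1 set \<Rightarrow> 'a set" where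
  "gen_ideal S = mspan (*) S"

definition prime_ideal :: "'a::comm_ring_1 set \<Rightarrow> bool" where
  "prime_ideal P \<longleftrightarrow> ring_ideal P \<and> P \<noteq> UNIV \<and> (\<forall>a b. a * b \<in> P \<longrightarrow> a \<in> P \<or> b \<in> P)"

definition noetherian_ring :: "'a::comm_ring_1 itself \<Rightarrow> bool" where
  "noetherian_ring _ \<longleftrightarrow> (\<forall>I::'a set. ring_ideal I \<longrightarrow> (\<exists>F. finite F \<and> I = gen_ideal F))"

definition direct_sum_decomp :: "('i \<Rightarrow> 'b::ab_group_add set) \<Rightarrow> bool" where
  "direct_sum_decomp G \<longleftrightarrow> (\<forall>i. add_subgroup (G i)) \<and>
     (\<forall>x. \<exists>!c. finite {i. c i \<noteq> 0} \<and> (\<forall>i. c i \<in> G i) \<and> x = (\<Sum>i\<in>{i. c i \<noteq> 0}. c i))"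

definition graded_ring :: "(nat \<Rightarrow> 'a::comm_ring_1 set) \<Rightarrow> bool" where
  "graded_ring Rg \<longleftrightarrow> direct_sum_decomp Rg \<and> 1 \<in> Rg 0 \<and>
     (\<forall>i j. \<forall>a\<in>Rg i. \<forall>b\<in>Rg j. a * b \<in> Rg (i + j))"

definition subring :: "'a::comm_ring_1 set \<Rightarrow> bool" where
  "subring S \<longleftrightarrow> add_subgroup S \<and> 1 \<in> S \<and> (\<forall>x\<in>S. \<forall>y\<in>S. x * y \<in> S)"

definition standard_graded :: "(nat \<Rightarrow> 'a::comm_ring_1 set) \<Rightarrow> bool" where
  "standard_graded Rg \<longleftrightarrow> graded_ring Rg \<and>
     (\<forall>S. subring S \<and> Rg 0 \<union> Rg 1 \<subseteq> S \<longrightarrow> S = UNIV)"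

definition sub_ideal :: "'a::comm_ring_1 set \<Rightarrow> 'a set \<Rightarrow> bool" where
  "sub_ideal A J \<longleftrightarrow> J \<subseteq> A \<and> add_subgroup J \<and> (\<forall>r\<in>A. \<forall>x\<in>J. r * x \<in> J)"

definition artinian_subring :: "'a::comm_ring_1 set \<Rightarrow> bool" where
  "artinian_subring A \<longleftrightarrow> (\<forall>J::nat \<Rightarrow> 'a set. (\<forall>n. sub_ideal A (J n)) \<and> (\<forall>n. J (Suc n) \<subseteq> J n)
      \<longrightarrow> (\<exists>N. \<forall>n\<ge>N. J n = J N))"

definition local_subring_max :: "'a::comm_ring_1 set \<Rightarrow> 'a set \<Rightarrow> bool" where
  "local_subring_max A m \<longleftrightarrow> sub_ideal A m \<and> m \<noteq> A \<and>
      (\<forall>J. sub_ideal A J \<and> J \<noteq> A \<longrightarrow> J \<subseteq> m)"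

definition graded_module ::
  "(nat \<Rightarrow> 'a::comm_ring_1 set) \<Rightarrow> ('a \<Rightarrow> 'b::ab_group_add \<Rightarrow> 'b) \<Rightarrow> (int \<Rightarrow> 'b set) \<Rightarrow> bool" where
  "graded_module Rg s Mg \<longleftrightarrow> module s \<and> direct_sum_decomp Mg \<and>
     (\<forall>i j. \<forall>r\<in>Rg i. \<forall>x\<in>Mg j. s r x \<in> Mg (int i + j))"

definition fin_gen_module :: "('a::comm_ring_1 \<Rightarrow> 'b::ab_group_add \<Rightarrow> 'b) \<Rightarrow> bool" where
  "fin_gen_module s \<longleftrightarrow> (\<exists>F. finite F \<and> mspan s F = UNIV)"

definition ann :: "('a::comm_ring_1 \<Rightarrow> 'b::ab_group_add \<Rightarrow> 'b) \<Rightarrow> 'b \<Rightarrow> 'a set" where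
  "ann s x = {r. s r x = 0}"

definition Ass :: "('a::comm_ring_1 \<Rightarrow> 'b::ab_group_add \<Rightarrow> 'b) \<Rightarrow> 'a set set" where
  "Ass s = {P. prime_ideal P \<and> (\<exists>x. ann s x = P)}"

end

theory Submission imports Defs begin

lemma ann_ideal:
  assumes "module s" shows "ring_ideal (ann s x)"
proof -
  interpret module s by fact
  have "s (r * a) x = 0" if "s a x = 0" for r a
    using that by (metis scale_scale scale_zero_right)
  then show ?thesis unfolding ring_ideal_def add_subgroup_def ann_def
    by (auto simp: scale_left_distrib scale_minus_left)
qed

lemma ideal_sum:
  assumes "ring_ideal I" "finite T" "\<forall>a\<in>T. f a \<in> I" shows "sum f T \<in> I"
  using assms(2,3)
proof (induction T rule: finite_induct)
  case empty then show ?case using assms(1) by (simp add: ring_ideal_def add_subgroup_def)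
next
  case (insert x F) then show ?case using assms(1) by (simp add: ring_ideal_def add_subgroup_def)
qed

lemma gen_ideal_sub:
  assumes "ring_ideal I" "G \<subseteq> I" shows "gen_ideal G \<subseteq> I"
proof
  fix y assume "y \<in> gen_ideal G"
  then obtain T r where "finite T" "T \<subseteq> G" "y = (\<Sum>a\<in>T. r a * a)"
    unfolding gen_ideal_def mspan_def by auto
  moreover have "\<forall>a\<in>T. r a * a \<in> I" using calculation assms by (auto simp: ring_ideal_def)
  ultimately show "y \<in> I" using ideal_sum[OF assms(1)] by auto
qed

lemma gen_ideal_incl: "G \<subseteq> gen_ideal G"
proof
  fix g assume "g \<in> G"
  then show "g \<in> gen_ideal G" unfolding gen_ideal_def mspan_def
    by (auto intro!: exI[of _ "{g}"] exI[of _ "\<lambda>_. 1"])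
qed

lemma noeth_max:
  fixes F :: "'a::comm_ring_1 set set"
  assumes "noetherian_ring TYPE('a)" "F \<noteq> {}" "\<forall>I\<in>F. ring_ideal I"
  shows "\<exists>I\<in>F. \<forall>J\<in>F. I \<subseteq> J \<longrightarrow> J = I"
proof (rule ccontr)
  assume "\<not> ?thesis"
  then have step: "\<forall>I\<in>F. \<exists>J\<in>F. I \<subset> J" by blast
  obtain I0 where I0: "I0 \<in> F" using assms(2) by blast
  define f where "f = rec_nat I0 (\<lambda>_ I. SOME J. J \<in> F \<and> I \<subset> J)"
  have fF: "f n \<in> F" for n
  proof (induction n)
    case 0 then show ?case using I0 by (simp add: f_def)
  next
    case (Suc n)
    then have "\<exists>J. J \<in> F \<and> f n \<subset> J" using step by blast
    moreover have "f (Suc n) = (SOME J. J \<in> F \<and> f n \<subset> J)" by (simp add: f_def)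
    ultimately show ?case by (metis (mono_tags, lifting) someI_ex)
  qed
  have fs: "f n \<subset> f (Suc n)" for n
  proof -
    have "\<exists>J. J \<in> F \<and> f n \<subset> J" using step fF by blast
    moreover have "f (Suc n) = (SOME J. J \<in> F \<and> f n \<subset> J)" by (simp add: f_def)
    ultimately show ?thesis by (metis (mono_tags, lifting) someI_ex)
  qed
  have mono: "i \<le> j \<Longrightarrow> f i \<subseteq> f j" for i j
    using lift_Suc_mono_le[of f] fs by (meson psubset_imp_subset)
  define U where "U = \<Union>(range f)"
  have idf: "ring_ideal (f n)" for n using fF assms(3) by blast
  have "ring_ideal U"
    unfolding ring_ideal_def add_subgroup_def
  proof (intro conjI ballI allI impI)
    show "0 \<in> U" using idf[of 0] unfolding U_def ring_ideal_def add_subgroup_def by blast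
  next
    fix x y assume "x \<in> U" "y \<in> U"
    then obtain i j where "x \<in> f i" "y \<in> f j" unfolding U_def by blast
    then have "x \<in> f (max i j)" "y \<in> f (max i j)" using mono by (meson max.cobounded1 max.cobounded2 subsetD)+
    then show "x + y \<in> U" using idf[of "max i j"] unfolding U_def ring_ideal_def add_subgroup_def by blast
  next
    fix x assume "x \<in> U"
    then obtain i where "x \<in> f i" unfolding U_def by blast
    then have "- x \<in> f i" using idf[of i] unfolding ring_ideal_def add_subgroup_def by blast
    then show "- x \<in> U" unfolding U_def by blast
  next
    fix r x assume "x \<in> U"
    then obtain i where "x \<in> f i" unfolding U_def by blast
    then have "r * x \<in> f i" using idf[of i] unfolding ring_ideal_def by blast
    then show "r * x \<in> U" unfolding U_def by blast
  qed
  then obtain G where G: "finite G" "U = gen_ideal G" using assms(1) unfolding noetherian_ring_def by blast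
  have "\<forall>g\<in>G. \<exists>n. g \<in> f n" using gen_ideal_incl[of G] G(2) unfolding U_def by blast
  then obtain k where k: "\<forall>g\<in>G. k g \<in> {n. g \<in> f n}" by (metis mem_Collect_eq)
  define N where "N = Max (k ` G)"
  have "G \<subseteq> f N"
  proof
    fix g assume g: "g \<in> G"
    then have "k g \<le> N" unfolding N_def using G(1) by auto
    then show "g \<in> f N" using mono k g by blast
  qed
  then have "U \<subseteq> f N" using G(2) gen_ideal_sub idf by blast
  moreover have "f (Suc N) \<subseteq> U" unfolding U_def by blast
  ultimately show False using fs[of N] by blast
qed

lemma nilp:
  fixes A :: "'a::comm_ring_1 set"
  assumes A1: "1 \<in> A" and Am: "\<forall>x\<in>A. \<forall>y\<in>A. x*y \<in> A" and Ag: "add_subgroup A"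
    and art: "artinian_subring A" and loc: "local_subring_max A m" and a: "a \<in> m"
  shows "\<exists>n. a^n = 0"
proof -
  have mA: "m \<subseteq> A" and msub: "sub_ideal A m" using loc unfolding local_subring_max_def sub_ideal_def by auto
  have aA: "a \<in> A" using a mA by blast
  have apA: "a^n \<in> A" for n by (induction n) (use A1 Am aA in auto)
  have A0: "0 \<in> A" using Ag unfolding add_subgroup_def by blast
  define J where "J n = {a^n * r | r. r \<in> A}" for n
  have Jsub: "sub_ideal A (J n)" for n
    unfolding sub_ideal_def add_subgroup_def J_def
  proof (intro conjI ballI)
    show "{a ^ n * r |r. r \<in> A} \<subseteq> A" using apA Am by blast
    show "0 \<in> {a ^ n * r |r. r \<in> A}" using A0 by (auto intro!: exI[of _ 0])
  next
    fix x y assume "x \<in> {a ^ n * r |r. r \<in> A}" "y \<in> {a ^ n * r |r. r \<in> A}"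
    then obtain r1 r2 where "r1 \<in> A" "r2 \<in> A" "x = a^n*r1" "y = a^n*r2" by blast
    then show "x + y \<in> {a ^ n * r |r. r \<in> A}" using Ag unfolding add_subgroup_def
      by (auto simp: distrib_left intro!: exI[of _ "r1+r2"])
  next
    fix x assume "x \<in> {a ^ n * r |r. r \<in> A}"
    then obtain r1 where "r1 \<in> A" "x = a^n*r1" by blast
    then show "- x \<in> {a ^ n * r |r. r \<in> A}" using Ag unfolding add_subgroup_def
      by (auto intro!: exI[of _ "-r1"])
  next
    fix b x assume "b \<in> A" "x \<in> {a ^ n * r |r. r \<in> A}"
    then obtain r1 where "r1 \<in> A" "x = a^n*r1" by blast
    then show "b * x \<in> {a ^ n * r |r. r \<in> A}" using Am \<open>b \<in> A\<close>
      by (auto simp: ac_simps intro!: exI[of _ "b*r1"])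
  qed
  have Jdec: "J (Suc n) \<subseteq> J n" for n
  proof
    fix x assume "x \<in> J (Suc n)"
    then obtain r where "r \<in> A" "x = a^Suc n * r" unfolding J_def by blast
    then show "x \<in> J n" unfolding J_def using Am aA by (auto simp: ac_simps intro!: exI[of _ "a*r"])
  qed
  obtain N where N: "\<forall>n\<ge>N. J n = J N" using art Jsub Jdec unfolding artinian_subring_def by blast
  have "a^N \<in> J N" unfolding J_def using A1 by (auto intro!: exI[of _ 1])
  moreover have e: "J (Suc N) = J N" using N by (metis le_SucI order_refl)
  ultimately have "a^N \<in> J (Suc N)" by blast
  then obtain c where c: "c \<in> A" "a^N = a^Suc N * c" unfolding J_def by blast
  define u where "u = 1 - a*c"
  have uA: "u \<in> A" unfolding u_def using Ag Am aA c A1 unfolding add_subgroup_def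
    by (metis diff_conv_add_uminus)
  define K where "K = {r * u | r. r \<in> A}"
  have Ksub: "sub_ideal A K"
    unfolding sub_ideal_def add_subgroup_def K_def
  proof (intro conjI ballI)
    show "{r * u |r. r \<in> A} \<subseteq> A" using uA Am by blast
    show "0 \<in> {r * u |r. r \<in> A}" using A0 by (auto intro!: exI[of _ 0])
  next
    fix x y assume "x \<in> {r * u |r. r \<in> A}" "y \<in> {r * u |r. r \<in> A}"
    then obtain r1 r2 where "r1 \<in> A" "r2 \<in> A" "x = r1*u" "y = r2*u" by blast
    then show "x + y \<in> {r * u |r. r \<in> A}" using Ag unfolding add_subgroup_def
      by (auto simp: distrib_right intro!: exI[of _ "r1+r2"])
  next
    fix x assume "x \<in> {r * u |r. r \<in> A}"
    then obtain r1 where "r1 \<in> A" "x = r1*u" by blast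
    then show "- x \<in> {r * u |r. r \<in> A}" using Ag unfolding add_subgroup_def
      by (auto intro!: exI[of _ "-r1"])
  next
    fix b x assume "b \<in> A" "x \<in> {r * u |r. r \<in> A}"
    then obtain r1 where "r1 \<in> A" "x = r1*u" by blast
    then show "b * x \<in> {r * u |r. r \<in> A}" using Am \<open>b \<in> A\<close>
      by (auto simp: ac_simps intro!: exI[of _ "b*r1"])
  qed
  have "K = A"
  proof (rule ccontr)
    assume "K \<noteq> A"
    then have "K \<subseteq> m" using loc Ksub unfolding local_subring_max_def by blast
    moreover have "u \<in> K" unfolding K_def using A1 by (auto intro!: exI[of _ 1])
    ultimately have um: "u \<in> m" by blast
    have "c * a \<in> m" using msub c a unfolding sub_ideal_def by blast
    then have "u + a*c \<in> m" using um msub unfolding sub_ideal_def add_subgroup_def by (simp add: ac_simps)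
    then have "1 \<in> m" unfolding u_def by simp
    then have "A \<subseteq> m" using msub unfolding sub_ideal_def by (metis mult.right_neutral subsetI)
    then show False using loc mA unfolding local_subring_max_def by blast
  qed
  then obtain v where "1 = v * u" using A1 unfolding K_def by blast
  have "a^N * u = 0" unfolding u_def using c by (simp add: algebra_simps)
  then have "a^N = 0" using \<open>1 = v*u\<close> by (metis mult.commute mult.left_neutral mult_zero_right mult.assoc)
  then show ?thesis by blast
qed

lemma dsd_sub: "direct_sum_decomp G \<Longrightarrow> add_subgroup (G i)"
  unfolding direct_sum_decomp_def by (drule conjunct1) (erule allE)

theorem lemma2p4:
  fixes Rg :: "nat \<Rightarrow> 'a::comm_ring_1 set"
    and m :: "'a set"
    and s :: "'a \<Rightarrow> 'b::ab_group_add \<Rightarrow> 'b"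
    and Mg :: "int \<Rightarrow> 'b set"
    and t :: int
  assumes "standard_graded Rg"
    and "noetherian_ring TYPE('a)"
    and "artinian_subring (Rg 0)"
    and "local_subring_max (Rg 0) m"
    and "prime_ideal (gen_ideal m)"
    and "graded_module Rg s Mg"
    and "fin_gen_module s"
    and "Ass s = {gen_ideal m}"
    and "Mg t \<noteq> {0}"
  shows "\<exists>x\<in>Mg t. ann s x = gen_ideal m"
proof -
  have gr: "graded_ring Rg" using assms(1) unfolding standard_graded_def by blast
  have A1: "1 \<in> Rg 0" using gr unfolding graded_ring_def by blast
  have Am: "\<forall>x\<in>Rg 0. \<forall>y\<in>Rg 0. x*y \<in> Rg 0" using gr unfolding graded_ring_def by (metis add_0)
  have "direct_sum_decomp Rg" using gr unfolding graded_ring_def by blast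
  then have Ag: "add_subgroup (Rg 0)" by (rule dsd_sub)
  have mA: "m \<subseteq> Rg 0" using assms(4) by (simp add: local_subring_max_def sub_ideal_def)
  have mod: "module s" using assms(6) by (simp add: graded_module_def)
  interpret module s by (rule mod)
  have Mgrade: "\<And>r x. r \<in> Rg 0 \<Longrightarrow> x \<in> Mg t \<Longrightarrow> s r x \<in> Mg t"
    using assms(6) unfolding graded_module_def by (metis of_nat_0 add_0)
  have "direct_sum_decomp Mg" using assms(6) unfolding graded_module_def by blast
  then have "add_subgroup (Mg t)" by (rule dsd_sub)
  then have "0 \<in> Mg t" unfolding add_subgroup_def by blast
  then obtain x0 where x0: "x0 \<in> Mg t" "x0 \<noteq> 0" using assms(9) by blast
  have annsup: "ann s y \<subseteq> ann s (s r y)" for r y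
  proof
    fix z assume "z \<in> ann s y"
    then have "s z y = 0" by (simp add: ann_def)
    then have "s z (s r y) = 0" by (metis scale_left_commute scale_zero_right)
    then show "z \<in> ann s (s r y)" by (simp add: ann_def)
  qed
  define F1 where "F1 = {ann s z | z. z \<noteq> 0 \<and> (\<exists>c\<in>Rg 0. z = s c x0)}"
  have "ann s x0 \<in> F1" unfolding F1_def using x0 A1 by force
  then have "F1 \<noteq> {}" by blast
  moreover have "\<forall>I\<in>F1. ring_ideal I" unfolding F1_def using ann_ideal[OF mod] by blast
  ultimately obtain I where I: "I \<in> F1" "\<forall>J\<in>F1. I \<subseteq> J \<longrightarrow> J = I"
    using noeth_max[OF assms(2)] by blast
  then obtain y c where y: "I = ann s y" "y \<noteq> 0" "c \<in> Rg 0" "y = s c x0" unfolding F1_def by blast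
  have yt: "y \<in> Mg t" using y x0 Mgrade by blast
  have my: "m \<subseteq> ann s y"
  proof
    fix a assume a: "a \<in> m"
    obtain n where n: "a^n = 0" using nilp[OF A1 Am Ag assms(3) assms(4) a] by blast
    have aA: "a \<in> Rg 0" using a mA by blast
    have apA: "a^k \<in> Rg 0" for k by (induction k) (use A1 Am aA in auto)
    show "a \<in> ann s y"
    proof (rule ccontr)
      assume na: "a \<notin> ann s y"
      have "s (a^k) y \<noteq> 0" for k
      proof (induction k)
        case 0 then show ?case using y by simp
      next
        case (Suc k)
        let ?w = "s (a^k) y"
        have "?w = s (a^k * c) x0" using y by (simp add: scale_scale)
        moreover have "a^k * c \<in> Rg 0" using apA y Am by blast
        ultimately have "ann s ?w \<in> F1" unfolding F1_def using Suc by blast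
        moreover have "I \<subseteq> ann s ?w" using annsup y by blast
        ultimately have "ann s ?w = ann s y" using I y by blast
        then have "s a ?w \<noteq> 0" using na unfolding ann_def by blast
        then show ?case by (simp add: scale_scale mult.commute)
      qed
      then show False using n by (metis scale_zero_left)
    qed
  qed
  have g1: "gen_ideal m \<subseteq> ann s y" using gen_ideal_sub[OF ann_ideal[OF mod] my] .
  define F2 where "F2 = {ann s z | z. z \<noteq> 0 \<and> (\<exists>r. z = s r y)}"
  have "ann s y \<in> F2" unfolding F2_def using y by (force intro!: exI[of _ 1])
  then have "F2 \<noteq> {}" by blast
  moreover have "\<forall>I\<in>F2. ring_ideal I" unfolding F2_def using ann_ideal[OF mod] by blast
  ultimately obtain Q where Q: "Q \<in> F2" "\<forall>J\<in>F2. Q \<subseteq> J \<longrightarrow> J = Q"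
    using noeth_max[OF assms(2)] by blast
  then obtain w r where w: "Q = ann s w" "w \<noteq> 0" "w = s r y" unfolding F2_def by blast
  have "prime_ideal Q"
    unfolding prime_ideal_def
  proof (intro conjI allI impI)
    show "ring_ideal Q" using w ann_ideal[OF mod] by blast
    have "1 \<notin> Q" using w by (simp add: ann_def)
    then show "Q \<noteq> UNIV" by blast
  next
    fix a b assume ab: "a * b \<in> Q"
    show "a \<in> Q \<or> b \<in> Q"
    proof (cases "a \<in> Q")
      case True then show ?thesis by blast
    next
      case False
      then have nz: "s a w \<noteq> 0" using w unfolding ann_def by blast
      have "s a w = s (a*r) y" using w by (simp add: scale_scale)
      then have "ann s (s a w) \<in> F2" unfolding F2_def using nz by blast
      moreover have "Q \<subseteq> ann s (s a w)" using annsup w by blast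
      ultimately have e: "ann s (s a w) = Q" using Q by blast
      have "s b (s a w) = 0" using ab w unfolding ann_def by (simp add: scale_scale ac_simps)
      then have "b \<in> Q" using e unfolding ann_def by blast
      then show ?thesis by blast
    qed
  qed
  then have "Q \<in> Ass s" unfolding Ass_def using w by blast
  then have "Q = gen_ideal m" using assms(8) by blast
  moreover have "ann s y \<subseteq> Q" using annsup w by blast
  ultimately have "ann s y = gen_ideal m" using g1 by blast
  then show ?thesis using yt by blast
qed

end
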